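(* For $n\ge 1$, the number of edges of $\mathcal{SP}_L(IS_n)$ is $$\frac12\left((2^n-1)^2-(3^n-2^n)\right).$$
   Context: $IS_n$ is the set of all partial injective maps of an $n$-element set $X$, with composition written left to right ($\alpha\beta$ means first $\alpha$, then $\beta$); its zero is the empty map. For $a\in IS_n$, $S^1a=\{sa:s\in IS_n\}\cup\{a\}$. $\mathcal{P}_L(IS_n)$ is the simple graph on the non-empty partial injections with distinct $a,b$ adjacent iff $S^1a\cap S^1b$ contains a non-empty map. $L_a$ is the Green $\mathcal{L}$-class of $a$ ($a\,\mathcal{L}\,b$ iff $S^1a=S^1b$). $\mathcal{SP}_L(IS_n)$ is the simple graph with vertex set $\{L_a: a \text{ non-empty}\}$, distinct $L_a,L_b$ adjacent iff $a,b$ are adjacent in $\mathcal{P}_L(IS_n)$. *)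

theory Defs
  imports Complex_Main
begin

type_synonym pmap = "nat \<Rightarrow> nat option"

definition IS :: "nat \<Rightarrow> pmap set" where
  "IS n = {f. dom f \<subseteq> {..<n} \<and> ran f \<subseteq> {..<n} \<and> inj_on f (dom f)}"

text \<open>Left-to-right composition: pcomp a b means first a, then b.\<close>
definition pcomp :: "pmap \<Rightarrow> pmap \<Rightarrow> pmap" where
  "pcomp a b = b \<circ>\<^sub>m a"

definition S1 :: "nat \<Rightarrow> pmap \<Rightarrow> pmap set" where
  "S1 n a = {pcomp s a | s. s \<in> IS n} \<union> {a}"

definition PL_adj :: "nat \<Rightarrow> pmap \<Rightarrow> pmap \<Rightarrow> bool" where
  "PL_adj n a b \<longleftrightarrow> a \<in> IS n \<and> b \<in> IS n \<and> a \<noteq> Map.empty \<and> b \<noteq> Map.empty \<and> a \<noteq> b \<and>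
     (\<exists>c \<in> S1 n a \<inter> S1 n b. c \<noteq> Map.empty)"

definition Lclass :: "nat \<Rightarrow> pmap \<Rightarrow> pmap set" where
  "Lclass n a = {b \<in> IS n. S1 n b = S1 n a}"

definition SPL_vertices :: "nat \<Rightarrow> pmap set set" where
  "SPL_vertices n = Lclass n ` (IS n - {Map.empty})"

definition SPL_edges :: "nat \<Rightarrow> pmap set set set" where
  "SPL_edges n = {{Lclass n a, Lclass n b} | a b. PL_adj n a b \<and> Lclass n a \<noteq> Lclass n b}"

end

theory Submission
  imports Defs "HOL-Library.FuncSet"
begin

lemma pcomp_IS:
  assumes "s \<in> IS n" "a \<in> IS n"
  shows "pcomp s a \<in> IS n" "ran (pcomp s a) \<subseteq> ran a"
proof -
  have s: "dom s \<subseteq> {..<n}" "ran s \<subseteq> {..<n}" "inj_on s (dom s)" using assms(1) by (auto simp: IS_def)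
  have a: "dom a \<subseteq> {..<n}" "ran a \<subseteq> {..<n}" "inj_on a (dom a)" using assms(2) by (auto simp: IS_def)
  show r: "ran (pcomp s a) \<subseteq> ran a"
    by (auto simp: pcomp_def ran_def map_comp_def split: option.splits)
  have d: "dom (pcomp s a) \<subseteq> dom s"
    by (auto simp: pcomp_def dom_def map_comp_def split: option.splits)
  have i: "inj_on (pcomp s a) (dom (pcomp s a))"
  proof (rule inj_onI)
    fix x y assume x: "x \<in> dom (pcomp s a)" and y: "y \<in> dom (pcomp s a)"
      and e: "pcomp s a x = pcomp s a y"
    from x obtain z where z: "s x = Some z" "a z \<noteq> None"
      by (auto simp: pcomp_def dom_def map_comp_def split: option.splits)
    from y obtain z' where z': "s y = Some z'" "a z' \<noteq> None"
      by (auto simp: pcomp_def dom_def map_comp_def split: option.splits)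
    have "a z = a z'" using e z z' by (simp add: pcomp_def map_comp_def)
    hence "z = z'" using a(3) z z' by (auto simp: inj_on_def dom_def)
    hence "s x = s y" using z z' by simp
    thus "x = y" using s(3) z z' by (auto simp: inj_on_def dom_def)
  qed
  show "pcomp s a \<in> IS n" using d s a r i by (auto simp: IS_def)
qed

lemma S1_char:
  assumes a: "a \<in> IS n"
  shows "S1 n a = {f \<in> IS n. ran f \<subseteq> ran a}"
proof
  show "S1 n a \<subseteq> {f \<in> IS n. ran f \<subseteq> ran a}"
    using pcomp_IS[OF _ a] a by (auto simp: S1_def)
next
  show "{f \<in> IS n. ran f \<subseteq> ran a} \<subseteq> S1 n a"
  proof
    fix f assume "f \<in> {f \<in> IS n. ran f \<subseteq> ran a}"
    hence f: "f \<in> IS n" "ran f \<subseteq> ran a" by auto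
    define s where "s = (\<lambda>x. case f x of None \<Rightarrow> None | Some y \<Rightarrow> Some (SOME z. a z = Some y))"
    have key: "f x = Some y \<Longrightarrow> a (SOME z. a z = Some y) = Some y" for x y
    proof -
      assume "f x = Some y"
      hence "y \<in> ran a" using f(2) by (auto simp: ran_def)
      then obtain z where "a z = Some y" by (auto simp: ran_def)
      thus ?thesis by (rule someI)
    qed
    have comp: "pcomp s a = f"
    proof
      fix x show "pcomp s a x = f x"
        using key[of x] by (cases "f x") (auto simp: pcomp_def s_def map_comp_def)
    qed
    have ds: "dom s = dom f" by (auto simp: s_def dom_def split: option.splits)
    have rs: "ran s \<subseteq> dom a"
      using key by (auto simp: s_def ran_def dom_def split: option.splits)
    have is_s: "inj_on s (dom s)"
    proof (rule inj_onI)
      fix x y assume x: "x \<in> dom s" and y: "y \<in> dom s" and e: "s x = s y"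
      from x obtain u where u: "f x = Some u" using ds by auto
      from y obtain v where v: "f y = Some v" using ds by auto
      have "a (SOME z. a z = Some u) = a (SOME z. a z = Some v)"
        using e u v by (simp add: s_def)
      hence "u = v" using key[OF u] key[OF v] by simp
      hence "f x = f y" using u v by simp
      thus "x = y" using f(1) u v by (auto simp: IS_def inj_on_def dom_def)
    qed
    have "ran s \<subseteq> {..<n}" using rs a by (auto simp: IS_def)
    hence "s \<in> IS n" using ds is_s f(1) by (auto simp: IS_def)
    thus "f \<in> S1 n a" using comp by (auto simp: S1_def)
  qed
qed

lemma S1_eq_iff:
  assumes "a \<in> IS n" "b \<in> IS n"
  shows "S1 n b = S1 n a \<longleftrightarrow> ran b = ran a"
proof
  assume e: "S1 n b = S1 n a"
  have "b \<in> S1 n a" "a \<in> S1 n b" using e by (auto simp: S1_def)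
  thus "ran b = ran a" using S1_char[OF assms(1)] S1_char[OF assms(2)] by auto
qed (simp add: S1_char assms)

definition F :: "nat \<Rightarrow> nat set \<Rightarrow> pmap set" where
  "F n A = {b \<in> IS n. ran b = A}"

lemma Lclass_F: "a \<in> IS n \<Longrightarrow> Lclass n a = F n (ran a)"
  using S1_eq_iff by (auto simp: Lclass_def F_def)

definition idm :: "nat set \<Rightarrow> pmap" where
  "idm A = (\<lambda>x. if x \<in> A then Some x else None)"

lemma idm_IS: "A \<subseteq> {..<n} \<Longrightarrow> idm A \<in> IS n"
  by (auto simp: IS_def idm_def dom_def ran_def inj_on_def split: if_splits)

lemma ran_idm: "ran (idm A) = A"
  by (auto simp: idm_def ran_def split: if_splits)

lemma ran_empty_iff: "ran a = {} \<longleftrightarrow> a = Map.empty"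
  by (auto simp: ran_def) (meson not_Some_eq)

lemma adj_iff:
  assumes "a \<in> IS n" "b \<in> IS n"
  shows "(\<exists>c \<in> S1 n a \<inter> S1 n b. c \<noteq> Map.empty) \<longleftrightarrow> ran a \<inter> ran b \<noteq> {}"
proof
  assume "\<exists>c \<in> S1 n a \<inter> S1 n b. c \<noteq> Map.empty"
  then obtain c where c: "c \<in> S1 n a" "c \<in> S1 n b" "c \<noteq> Map.empty" by auto
  hence "ran c \<noteq> {}" using ran_empty_iff by blast
  thus "ran a \<inter> ran b \<noteq> {}" using c S1_char assms by blast
next
  assume "ran a \<inter> ran b \<noteq> {}"
  then obtain y where y: "y \<in> ran a" "y \<in> ran b" by auto
  have "y < n" using y assms by (auto simp: IS_def)
  hence "idm {y} \<in> IS n" by (intro idm_IS) auto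
  moreover have "idm {y} \<noteq> Map.empty" using ran_idm[of "{y}"] ran_empty_iff by force
  ultimately show "\<exists>c \<in> S1 n a \<inter> S1 n b. c \<noteq> Map.empty"
    using y S1_char assms ran_idm[of "{y}"] by auto
qed

definition E' :: "nat \<Rightarrow> nat set set set" where
  "E' n = {{A, B} | A B. A \<subseteq> {..<n} \<and> B \<subseteq> {..<n} \<and> A \<noteq> B \<and> A \<inter> B \<noteq> {}}"

lemma F_inj: "inj_on (F n) (Pow {..<n})"
proof (rule inj_onI)
  fix A B assume "A \<in> Pow {..<n}" "B \<in> Pow {..<n}" "F n A = F n B"
  moreover have "idm A \<in> F n A" using idm_IS ran_idm \<open>A \<in> Pow {..<n}\<close> by (auto simp: F_def)
  ultimately have "idm A \<in> F n B" by simp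
  hence "ran (idm A) = B" by (simp add: F_def)
  thus "A = B" using ran_idm by simp
qed

lemma SPL_eq: "SPL_edges n = (\<lambda>e. F n ` e) ` E' n"
proof
  show "SPL_edges n \<subseteq> (\<lambda>e. F n ` e) ` E' n"
  proof
    fix e assume "e \<in> SPL_edges n"
    then obtain a b where ab: "e = {Lclass n a, Lclass n b}" "PL_adj n a b" "Lclass n a \<noteq> Lclass n b"
      by (auto simp: SPL_edges_def)
    have I: "a \<in> IS n" "b \<in> IS n" using ab by (auto simp: PL_adj_def)
    have "ran a \<inter> ran b \<noteq> {}" using ab(2) adj_iff[OF I] by (auto simp: PL_adj_def)
    moreover have "ran a \<noteq> ran b" using ab(3) Lclass_F I by auto
    moreover have "ran a \<subseteq> {..<n}" "ran b \<subseteq> {..<n}" using I by (auto simp: IS_def)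
    ultimately have "{ran a, ran b} \<in> E' n" unfolding E'_def mem_Collect_eq
      by (intro exI[of _ "ran a"] exI[of _ "ran b"]) simp
    moreover have "e = F n ` {ran a, ran b}" using ab(1) Lclass_F I by auto
    ultimately show "e \<in> (\<lambda>e. F n ` e) ` E' n" by blast
  qed
next
  show "(\<lambda>e. F n ` e) ` E' n \<subseteq> SPL_edges n"
  proof
    fix e assume "e \<in> (\<lambda>e. F n ` e) ` E' n"
    then obtain A B where AB: "e = F n ` {A, B}" "A \<subseteq> {..<n}" "B \<subseteq> {..<n}" "A \<noteq> B" "A \<inter> B \<noteq> {}"
      by (auto simp: E'_def)
    have I: "idm A \<in> IS n" "idm B \<in> IS n" using AB idm_IS by auto
    have L: "Lclass n (idm A) = F n A" "Lclass n (idm B) = F n B"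
      using Lclass_F I ran_idm by auto
    have "F n A \<noteq> F n B" using F_inj AB by (auto simp: inj_on_def)
    moreover have "idm A \<noteq> Map.empty" "idm B \<noteq> Map.empty" "idm A \<noteq> idm B"
      using ran_idm ran_empty_iff AB(4,5) by (metis inf_bot_left, metis inf_bot_right, metis)
    moreover have "ran (idm A) \<inter> ran (idm B) \<noteq> {}" using AB(5) by (simp add: ran_idm)
    ultimately have "PL_adj n (idm A) (idm B)" "Lclass n (idm A) \<noteq> Lclass n (idm B)"
      unfolding PL_adj_def using I adj_iff[OF I] L by simp_all
    moreover have "e = {Lclass n (idm A), Lclass n (idm B)}" using AB(1) L by simp
    ultimately show "e \<in> SPL_edges n" unfolding SPL_edges_def mem_Collect_eq
      by (intro exI[of _ "idm A"] exI[of _ "idm B"]) simp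
  qed
qed

lemma card_SPL: "card (SPL_edges n) = card (E' n)"
proof -
  have "inj_on ((`) (F n)) (E' n)"
    by (rule inj_on_image, rule inj_on_subset[OF F_inj]) (auto simp: E'_def)
  thus ?thesis unfolding SPL_eq by (rule card_image)
qed

definition P :: "nat \<Rightarrow> (nat set \<times> nat set) set" where
  "P n = {(A, B). A \<subseteq> {..<n} \<and> B \<subseteq> {..<n} \<and> A \<noteq> B \<and> A \<inter> B \<noteq> {}}"

lemma card_P: "card (P n) = 2 * card (E' n)"
proof -
  define fib where "fib e = {p \<in> P n. {fst p, snd p} = e}" for e
  have fin: "finite (E' n)"
    by (rule finite_subset[of _ "Pow (Pow {..<n})"]) (auto simp: E'_def)
  have U: "P n = (\<Union>e\<in>E' n. fib e)"
  proof
    show "P n \<subseteq> (\<Union>e\<in>E' n. fib e)"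
    proof
      fix p assume p: "p \<in> P n"
      obtain A B where AB: "p = (A, B)" by (cases p)
      have "{A, B} \<in> E' n" using p AB unfolding E'_def P_def mem_Collect_eq
        by (intro exI[of _ A] exI[of _ B]) simp
      moreover have "p \<in> fib {A, B}" using p AB by (simp add: fib_def)
      ultimately show "p \<in> (\<Union>e\<in>E' n. fib e)" by blast
    qed
  qed (auto simp: fib_def)
  have fibc: "card (fib e) = 2" if "e \<in> E' n" for e
  proof -
    from that obtain A B where AB: "e = {A, B}" "A \<subseteq> {..<n}" "B \<subseteq> {..<n}" "A \<noteq> B" "A \<inter> B \<noteq> {}"
      by (auto simp: E'_def)
    have "fib e = {(A, B), (B, A)}"
      using AB by (auto simp: fib_def P_def doubleton_eq_iff)
    thus ?thesis using AB(4) by simp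
  qed
  have "card (P n) = (\<Sum>e\<in>E' n. card (fib e))"
    unfolding U
  proof (rule card_UN_disjoint[OF fin])
    show "\<forall>e\<in>E' n. finite (fib e)"
      using fibc card_ge_0_finite by (metis zero_less_numeral)
    show "\<forall>e\<in>E' n. \<forall>e'\<in>E' n. e \<noteq> e' \<longrightarrow> fib e \<inter> fib e' = {}"
      by (auto simp: fib_def)
  qed
  also have "\<dots> = (\<Sum>e\<in>E' n. 2)" using fibc by simp
  finally show ?thesis by simp
qed

definition D :: "nat set \<Rightarrow> (nat set \<times> nat set) set" where
  "D S = {(A, B). A \<subseteq> S \<and> B \<subseteq> S \<and> A \<inter> B = {}}"

lemma card_D:
  assumes "finite S"
  shows "card (D S) = 3 ^ card S"
proof -
  define g :: "(nat \<Rightarrow> nat) \<Rightarrow> nat set \<times> nat set" where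
    "g f = ({i\<in>S. f i = 0}, {i\<in>S. f i = 1})" for f
  define g' :: "nat set \<times> nat set \<Rightarrow> (nat \<Rightarrow> nat)" where
    "g' p = (\<lambda>i. if i \<in> S then (if i \<in> fst p then 0 else if i \<in> snd p then 1 else 2) else undefined)" for p
  let ?Pi = "PiE S (\<lambda>_. {0, 1, 2::nat})"
  have "bij_betw g ?Pi (D S)"
  proof (rule bij_betw_byWitness[where f' = g'])
    show "\<forall>f\<in>?Pi. g' (g f) = f"
    proof
      fix f assume f: "f \<in> ?Pi"
      show "g' (g f) = f"
      proof
        fix i show "g' (g f) i = f i"
          using f by (cases "i \<in> S") (auto simp: g_def g'_def PiE_def extensional_def Pi_iff)
      qed
    qed
    show "\<forall>p\<in>D S. g (g' p) = p"
    proof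
      fix p assume p: "p \<in> D S"
      obtain A B where AB: "p = (A, B)" by (cases p)
      have h: "A \<subseteq> S" "B \<subseteq> S" "A \<inter> B = {}" using p AB by (auto simp: D_def)
      have "{i\<in>S. g' (A, B) i = 0} = A" using h by (auto simp: g'_def)
      moreover have "{i\<in>S. g' (A, B) i = 1} = B" using h by (auto simp: g'_def)
      ultimately show "g (g' p) = p" using AB by (simp add: g_def)
    qed
    show "g ` ?Pi \<subseteq> D S"
      by (auto simp: D_def g_def)
    show "g' ` D S \<subseteq> ?Pi"
      by (auto simp: D_def g'_def split: if_splits)
  qed
  hence "card (D S) = card ?Pi" by (simp add: bij_betw_same_card)
  also have "\<dots> = 3 ^ card S" using assms by (simp add: card_PiE numeral_3_eq_3)
  finally show ?thesis .
qed

lemma count_nat: "card (P n) + 3 ^ n + (2 ^ n - 1) = 4 ^ n"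
proof -
  let ?S = "{..<n}"
  define Dg where "Dg = (\<lambda>A. (A, A)) ` (Pow ?S - {{}})"
  have cDg: "card Dg = 2 ^ n - 1"
    unfolding Dg_def
    by (subst card_image) (auto simp: inj_on_def card_Pow)
  have part: "Pow ?S \<times> Pow ?S = P n \<union> D ?S \<union> Dg"
    by (auto simp: P_def D_def Dg_def)
  have fP: "finite (P n)"
    by (rule finite_subset[of _ "Pow ?S \<times> Pow ?S"]) (auto simp: P_def)
  have fD: "finite (D ?S)"
    by (rule finite_subset[of _ "Pow ?S \<times> Pow ?S"]) (auto simp: D_def)
  have fDg: "finite Dg" by (simp add: Dg_def)
  have "card (Pow ?S \<times> Pow ?S) = card (P n \<union> D ?S) + card Dg"
    unfolding part by (rule card_Un_disjoint) (use fP fD fDg in \<open>auto simp: P_def D_def Dg_def\<close>)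
  also have "card (P n \<union> D ?S) = card (P n) + card (D ?S)"
    by (rule card_Un_disjoint) (use fP fD in \<open>auto simp: P_def D_def\<close>)
  finally have "card (Pow ?S \<times> Pow ?S) = card (P n) + card (D ?S) + card Dg" .
  moreover have "card (Pow ?S \<times> Pow ?S) = 4 ^ n"
    by (simp add: card_cartesian_product card_Pow power_mult_distrib[symmetric])
  ultimately show ?thesis using card_D[of ?S] cDg by simp
qed

theorem mainTheorem15:
  fixes n :: nat
  assumes "n \<ge> 1"
  shows "real (card (SPL_edges n)) = (((2::real) ^ n - 1) ^ 2 - (3 ^ n - 2 ^ n)) / 2"
proof -
  have "(1::nat) \<le> 2 ^ n" by simp
  hence "card (P n) + 3 ^ n + 2 ^ n = 4 ^ n + 1"
    using count_nat[of n] by linarith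
  hence "real (card (P n)) + 3 ^ n + 2 ^ n = 4 ^ n + 1"
  proof -
    assume h: "card (P n) + 3 ^ n + 2 ^ n = 4 ^ n + 1"
    have "real (card (P n) + 3 ^ n + 2 ^ n) = real (4 ^ n + 1)" by (simp only: h)
    thus ?thesis by simp
  qed
  hence "2 * real (card (SPL_edges n)) + 3 ^ n + 2 ^ n = 4 ^ n + 1"
    by (simp add: card_P card_SPL)
  moreover have "(4::real) ^ n = (2 ^ n) ^ 2"
    by (simp add: power_mult_distrib[symmetric] power2_eq_square)
  ultimately show ?thesis by (simp add: field_simps power2_eq_square)
qed

end
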